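(* Let $\mathcal{I}$ be an interpreted system, $\mathit{Prop}$ a set of atomic propositions, $S$ and $T$ indexical sets of agents in $\mathcal{I}$, and $\approx$ a synchronous epistemic bisimulation on $\mathcal{I}$ with respect to $\mathit{Prop}$ such that (a) $S\subseteq T$ is valid in $\mathcal{I}$, and (b) for every point $(r,m)$ of $\mathcal{I}$ there exists a point $(r',m)$ with $(r,m)\approx(r',m)$ and $S(r',m)=T(r,m)$. Then for every $p\in\mathit{Prop}$ and every agent $i$, the formula $B^S_i\,CB_S\,p\Leftrightarrow B^T_i\,CB_T\,p$ is valid in $\mathcal{I}$.
   Context: Agents $\mathrm{Agt}=\{1,\dots,n\}$. An interpreted system $\mathcal{I}=(\mathcal{R},\pi)$ consists of a set of runs (functions from times $\mathbb{N}$ to global states $(s_e,s_1,\dots,s_n)$) and an interpretation $\pi$ giving the atomic propositions true at each point $(r,m)$; $r_i(m)$ is agent $i$'s local state; $(r,m)\sim_i(r',m')$ iff $r_i(m)=r'_i(m')$; $K_i\phi$ holds at $(r,m)$ iff $\phi$ holds at all $(r',m')\sim_i(r,m)$. An indexical set $S$ assigns $S(r,m)\subseteq\mathrm{Agt}$ to each point; $i\in S$ holds at $(r,m)$ iff $i\in S(r,m)$; $S\subseteq T$ is valid if $S(r,m)\subseteq T(r,m)$ at every point. $B^S_i\phi:=K_i(i\in S\Rightarrow\phi)$; $E^B_S\phi:=\bigwedge_{i\in S}B^S_i\phi$ (over $i\in S(r,m)$ at the point of evaluation); $CB_S\phi:=\bigwedge_{k\ge1}(E^B_S)^k\phi$.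 A synchronous epistemic bisimulation on $\mathcal{I}$ with respect to $\mathit{Prop}$ is a relation $\approx$ on points such that whenever $(r,m)\approx(r',m')$: $m=m'$; for all $p\in\mathit{Prop}$, $p$ holds at $(r,m)$ iff it holds at $(r',m)$; and $(r,m)\sim_i(r',m)$ for every agent $i$. A formula is valid in $\mathcal{I}$ if it holds at every point. *)

theory Defs
  imports Main
begin

text \<open>Agents are 1..n. A global state is (s_e, s) where s i is the local state of agent i.
  A run maps times to global states; a point is (run, time).\<close>

type_synonym ('e,'l) gstate = "'e \<times> (nat \<Rightarrow> 'l)"
type_synonym ('e,'l) run = "nat \<Rightarrow> ('e,'l) gstate"
type_synonym ('e,'l) point = "('e,'l) run \<times> nat"

definition Agt :: "nat \<Rightarrow> nat set" where
  "Agt n = {1..n}"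

definition points :: "('e,'l) run set \<Rightarrow> ('e,'l) point set" where
  "points R = {(r, m). r \<in> R}"

definition lstate :: "('e,'l) run \<Rightarrow> nat \<Rightarrow> nat \<Rightarrow> 'l" where
  "lstate r i m = snd (r m) i"

definition indist :: "nat \<Rightarrow> ('e,'l) point \<Rightarrow> ('e,'l) point \<Rightarrow> bool" where
  "indist i pt pt' = (lstate (fst pt) i (snd pt) = lstate (fst pt') i (snd pt'))"

definition Kn :: "('e,'l) run set \<Rightarrow> nat \<Rightarrow> (('e,'l) point \<Rightarrow> bool) \<Rightarrow> ('e,'l) point \<Rightarrow> bool" where
  "Kn R i \<phi> pt = (\<forall>pt' \<in> points R. indist i pt pt' \<longrightarrow> \<phi> pt')"

definition Bel :: "('e,'l) run set \<Rightarrow> (('e,'l) point \<Rightarrow> nat set) \<Rightarrow> nat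
    \<Rightarrow> (('e,'l) point \<Rightarrow> bool) \<Rightarrow> ('e,'l) point \<Rightarrow> bool" where
  "Bel R S i \<phi> = Kn R i (\<lambda>pt. i \<in> S pt \<longrightarrow> \<phi> pt)"

definition EB :: "('e,'l) run set \<Rightarrow> (('e,'l) point \<Rightarrow> nat set)
    \<Rightarrow> (('e,'l) point \<Rightarrow> bool) \<Rightarrow> ('e,'l) point \<Rightarrow> bool" where
  "EB R S \<phi> pt = (\<forall>i \<in> S pt. Bel R S i \<phi> pt)"

definition CB :: "('e,'l) run set \<Rightarrow> (('e,'l) point \<Rightarrow> nat set)
    \<Rightarrow> (('e,'l) point \<Rightarrow> bool) \<Rightarrow> ('e,'l) point \<Rightarrow> bool" where
  "CB R S \<phi> pt = (\<forall>k \<ge> 1. ((EB R S) ^^ k) \<phi> pt)"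

definition atom :: "(('e,'l) point \<Rightarrow> 'p set) \<Rightarrow> 'p \<Rightarrow> ('e,'l) point \<Rightarrow> bool" where
  "atom \<pi> p pt = (p \<in> \<pi> pt)"

definition valid :: "('e,'l) run set \<Rightarrow> (('e,'l) point \<Rightarrow> bool) \<Rightarrow> bool" where
  "valid R \<phi> = (\<forall>pt \<in> points R. \<phi> pt)"

definition indexical :: "nat \<Rightarrow> ('e,'l) run set \<Rightarrow> (('e,'l) point \<Rightarrow> nat set) \<Rightarrow> bool" where
  "indexical n R S = (\<forall>pt \<in> points R. S pt \<subseteq> Agt n)"

definition sync_bisim :: "nat \<Rightarrow> ('e,'l) run set \<Rightarrow> (('e,'l) point \<Rightarrow> 'p set) \<Rightarrow> 'p set
    \<Rightarrow> (('e,'l) point \<Rightarrow> ('e,'l) point \<Rightarrow> bool) \<Rightarrow> bool" where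
  "sync_bisim n R \<pi> Prop rel =
    (\<forall>r m r' m'. rel (r, m) (r', m') \<longrightarrow>
        (r, m) \<in> points R \<and> (r', m') \<in> points R \<and>
        m = m' \<and>
        (\<forall>p \<in> Prop. p \<in> \<pi> (r, m) \<longleftrightarrow> p \<in> \<pi> (r', m)) \<and>
        (\<forall>i \<in> Agt n. indist i (r, m) (r', m)))"

end

theory Submission
  imports Defs
begin

lemma EB_iff: "EB R S \<psi> y = (\<forall>i\<in>S y. \<forall>z\<in>points R. indist i y z \<longrightarrow> i \<in> S z \<longrightarrow> \<psi> z)"
  unfolding EB_def Bel_def Kn_def by blast

lemma EB_Suc: "((EB R S) ^^ Suc k) \<phi> y = EB R S (((EB R S) ^^ k) \<phi>) y"
  by simp

lemma down_lemma:
  assumes "\<forall>pt \<in> points R. S pt \<subseteq> T pt" and "y \<in> points R"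
    and "((EB R T) ^^ k) \<phi> y"
  shows "((EB R S) ^^ k) \<phi> y"
  using assms(2,3)
proof (induction k arbitrary: y)
  case 0 then show ?case by simp
next
  case (Suc k)
  show ?case
    unfolding EB_Suc EB_iff[of R S "((EB R S) ^^ k) \<phi>"]
  proof (intro ballI impI)
    fix a z assume a: "a \<in> S y" and z: "z \<in> points R" and ind: "indist a y z" and az: "a \<in> S z"
    have "a \<in> T y" "a \<in> T z" using a az assms(1) Suc.prems(1) z by auto
    then have "((EB R T) ^^ k) \<phi> z" using Suc.prems(2) z ind
      unfolding EB_Suc EB_iff[of R T "((EB R T) ^^ k) \<phi>"] by blast
    then show "((EB R S) ^^ k) \<phi> z" using Suc.IH z by blast
  qed
qed

lemma up_lemma:
  assumes T: "indexical n R T"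
    and B: "sync_bisim n R \<pi> Prop rel"
    and E: "\<forall>r m. (r, m) \<in> points R \<longrightarrow>
           (\<exists>r'. rel (r, m) (r', m) \<and> S (r', m) = T (r, m))"
    and p: "p \<in> Prop"
  shows "\<And>y y'. y \<in> points R \<Longrightarrow> rel y y' \<Longrightarrow> S y' = T y \<Longrightarrow>
      ((EB R S) ^^ k) (atom \<pi> p) y' \<Longrightarrow> ((EB R T) ^^ k) (atom \<pi> p) y"
proof (induction k)
  case 0
  obtain r m r' m' where yy: "y = (r,m)" "y' = (r',m')" by fastforce
  have mm: "m = m'" using B 0(2) unfolding yy sync_bisim_def by blast
  show ?case using 0 B p unfolding yy mm sync_bisim_def atom_def by auto
next
  case (Suc k)
  show ?case
    unfolding EB_Suc EB_iff[of R T "((EB R T) ^^ k) (atom \<pi> p)"]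
  proof (intro ballI impI)
    fix a z assume a: "a \<in> T y" and z: "z \<in> points R" and ind: "indist a y z" and az: "a \<in> T z"
    obtain r m where zz: "z = (r,m)" by fastforce
    obtain r' where rz: "rel z (r',m)" and Sz: "S (r',m) = T z" using E z zz by blast
    obtain yr ym yr' ym' where yy: "y = (yr,ym)" "y' = (yr',ym')" by fastforce
    have aA: "a \<in> Agt n" using T Suc.prems(1) a unfolding indexical_def by blast
    have z'p: "(r',m) \<in> points R" using B rz zz unfolding sync_bisim_def by auto
    have i1: "indist a z (r',m)" using B rz zz aA unfolding sync_bisim_def by auto
    have ym: "ym = ym'" using B Suc.prems(2) unfolding yy sync_bisim_def by blast
    have i2: "indist a y y'" using B Suc.prems(2) aA unfolding yy ym sync_bisim_def by auto
    have i3: "indist a y' (r',m)" using i1 i2 ind unfolding indist_def by simp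
    have "a \<in> S y'" using a Suc.prems(3) by simp
    moreover have "a \<in> S (r',m)" using Sz az by simp
    ultimately have "((EB R S) ^^ k) (atom \<pi> p) (r',m)"
      using Suc.prems(4) z'p i3
      unfolding EB_Suc EB_iff[of R S "((EB R S) ^^ k) (atom \<pi> p)"] by blast
    then show "((EB R T) ^^ k) (atom \<pi> p) z" using Suc.IH z rz Sz by blast
  qed
qed

theorem proposition10:
  fixes n :: nat
    and R :: "('e,'l) run set"
    and \<pi> :: "('e,'l) point \<Rightarrow> 'p set"
    and Prop :: "'p set"
    and S T :: "('e,'l) point \<Rightarrow> nat set"
    and rel :: "('e,'l) point \<Rightarrow> ('e,'l) point \<Rightarrow> bool"
  assumes "indexical n R S" and "indexical n R T"
    and "sync_bisim n R \<pi> Prop rel"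
    and "\<forall>pt \<in> points R. S pt \<subseteq> T pt"
    and "\<forall>r m. (r, m) \<in> points R \<longrightarrow>
           (\<exists>r'. rel (r, m) (r', m) \<and> S (r', m) = T (r, m))"
  shows "\<forall>p \<in> Prop. \<forall>i \<in> Agt n.
           valid R (\<lambda>pt. Bel R S i (CB R S (atom \<pi> p)) pt
                        \<longleftrightarrow> Bel R T i (CB R T (atom \<pi> p)) pt)"
  unfolding valid_def
proof (intro ballI iffI)
  fix p i x assume p: "p \<in> Prop" and i: "i \<in> Agt n" and x: "x \<in> points R"
  {
    assume H: "Bel R S i (CB R S (atom \<pi> p)) x"
    show "Bel R T i (CB R T (atom \<pi> p)) x"
      unfolding Bel_def Kn_def
    proof (intro ballI impI)
      fix y assume y: "y \<in> points R" and iy: "indist i x y" and iT: "i \<in> T y"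
      obtain r m where yy: "y = (r,m)" by fastforce
      obtain r' where ry: "rel y (r',m)" and Sy: "S (r',m) = T y" using assms(5) y yy by blast
      have y'p: "(r',m) \<in> points R" using assms(3) ry yy unfolding sync_bisim_def by auto
      have "indist i y (r',m)" using assms(3) ry yy i unfolding sync_bisim_def by auto
      then have "indist i x (r',m)" using iy unfolding indist_def by simp
      then have "CB R S (atom \<pi> p) (r',m)" using H y'p iT Sy unfolding Bel_def Kn_def by auto
      then show "CB R T (atom \<pi> p) y" unfolding CB_def
        using up_lemma[OF assms(2,3,5) p y ry Sy] by blast
    qed
  }
  {
    assume H: "Bel R T i (CB R T (atom \<pi> p)) x"
    show "Bel R S i (CB R S (atom \<pi> p)) x"
      unfolding Bel_def Kn_def
    proof (intro ballI impI)
      fix y assume y: "y \<in> points R" and iy: "indist i x y" and iS: "i \<in> S y"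
      have "i \<in> T y" using iS assms(4) y by auto
      then have "CB R T (atom \<pi> p) y" using H y iy unfolding Bel_def Kn_def by auto
      then show "CB R S (atom \<pi> p) y" unfolding CB_def
        using down_lemma[OF assms(4) y] by blast
    qed
  }
qed

end
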